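(* The cycle $C_3\cong K_3$ is not a strict prime $k$th-power distance graph for any integer $k\ge 2$.
   Context: A graph $G$ is a strict prime $k$th-power distance graph if there is an injective map $L:V(G)\to\mathbb{Z}$ such that for every edge $uv$ of $G$, $|L(u)-L(v)|=p^k$ for some prime $p$ (the prime may depend on the edge). *)

theory Defs
  imports "HOL-Computational_Algebra.Primes"
begin

text \<open>A graph is given by a vertex set V and a symmetric irreflexive edge relation E
  on V.\<close>

definition strict_prime_power_distance_graph ::
  "nat \<Rightarrow> 'a set \<Rightarrow> ('a \<Rightarrow> 'a \<Rightarrow> bool) \<Rightarrow> bool" where
  "strict_prime_power_distance_graph k V E \<longleftrightarrow>
     (\<exists>L :: 'a \<Rightarrow> int. inj_on L V \<and>
        (\<forall>u\<in>V. \<forall>v\<in>V. E u v \<longrightarrow> (\<exists>p::nat. prime p \<and> \<bar>L u - L v\<bar> = int p ^ k)))"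

definition K3_vertices :: "nat set" where
  "K3_vertices = {0, 1, 2}"

definition K3_edge :: "nat \<Rightarrow> nat \<Rightarrow> bool" where
  "K3_edge u v \<longleftrightarrow> u \<in> K3_vertices \<and> v \<in> K3_vertices \<and> u \<noteq> v"

end

theory Submission
  imports Defs
begin

lemma pow_sum_gt:
  fixes a b :: nat
  assumes "a > 0" "b > 0" "k \<ge> 2"
  shows "a^k + b^k < (a+b)^k"
  using assms(3)
proof (induction k rule: dec_induct)
  case base
  then show ?case using assms by (simp add: power2_eq_square algebra_simps)
next
  case (step n)
  have "(a+b)^Suc n = (a+b)*(a+b)^n" by simp
  also have "\<dots> > (a+b)*(a^n+b^n)" using step assms by simp
  finally have "(a+b)*(a^n+b^n) < (a+b)^Suc n" .
  moreover have "a^Suc n + b^Suc n \<le> (a+b)*(a^n+b^n)" by (simp add: algebra_simps)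
  ultimately show ?case by linarith
qed

lemma no_prime_fermat:
  fixes x y z k :: nat
  assumes "prime x" "prime y" "prime z" "k \<ge> 2" "x^k + y^k = z^k"
  shows False
proof -
  have x2: "x \<ge> 2" "y \<ge> 2" "z \<ge> 2" using assms prime_ge_2_nat by auto
  have k0: "k > 0" using assms by simp
  show False
  proof (cases "even z")
    case True
    then have "z = 2" using assms(3) by (metis primes_dvd_imp_eq two_is_prime_nat)
    have "x^k \<ge> 2^k" using x2(1) by (simp add: power_mono)
    moreover have "y^k \<ge> 2^k" using x2(2) by (simp add: power_mono)
    moreover have "(2::nat)^k > 0" by simp
    moreover have "x^k + y^k = 2^k" using assms(5) \<open>z=2\<close> by simp
    ultimately show False by linarith
  next
    case False
    then have odd_sum: "odd (x^k + y^k)" using assms(5) by simp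
    have "\<exists>u v. u = 2 \<and> odd v \<and> prime v \<and> u^k + v^k = z^k"
    proof (cases "even x")
      case True
      then have "x = 2" using assms(1) by (metis primes_dvd_imp_eq two_is_prime_nat)
      moreover have "odd y" using odd_sum True k0 by simp
      ultimately show ?thesis using assms by blast
    next
      case xo: False
      then have "even y" using odd_sum k0 by simp
      then have "y = 2" using assms(2) by (metis primes_dvd_imp_eq two_is_prime_nat)
      then show ?thesis using assms xo by (metis add.commute)
    qed
    then obtain u v where uv: "u = 2" "odd v" "prime v" "u^k + v^k = z^k" by blast
    have pos: "(0::nat) < 2^k" by simp
    have e: "2^k + v^k = z^k" using uv(1,4) by simp
    have "v^k < z^k" using pos e by linarith
    then have "v < z" using power_less_imp_less_base by blast
    moreover have "even (z - v)" using uv(2) False \<open>v<z\<close> by simp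
    ultimately have "z \<ge> v + 2" by presburger
    then have "(v+2)^k \<le> z^k" by (simp add: power_mono)
    moreover have "v^k + 2^k < (v+2)^k"
      using pow_sum_gt[of v 2 k] assms(4) uv prime_gt_0_nat by simp
    ultimately show False using e by linarith
  qed
qed

lemma int_fermat:
  fixes x y z k :: nat
  assumes "prime x" "prime y" "prime z" "k \<ge> 2" "int x^k + int y^k = int z^k"
  shows False
proof -
  have "x^k + y^k = z^k" using assms(5) by (metis of_nat_add of_nat_eq_iff of_nat_power)
  then show False using no_prime_fermat assms by blast
qed

theorem mainTheorem11:
  fixes k :: nat
  assumes "k \<ge> 2"
  shows "\<not> strict_prime_power_distance_graph k K3_vertices K3_edge"
proof
  assume "strict_prime_power_distance_graph k K3_vertices K3_edge"
  then obtain L :: "nat \<Rightarrow> int" where inj: "inj_on L K3_vertices" and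
    E: "\<forall>u\<in>K3_vertices. \<forall>v\<in>K3_vertices. K3_edge u v \<longrightarrow> (\<exists>p::nat. prime p \<and> \<bar>L u - L v\<bar> = int p ^ k)"
    unfolding strict_prime_power_distance_graph_def by blast
  obtain P where P: "prime P" "\<bar>L 0 - L 1\<bar> = int P ^ k"
    using E unfolding K3_edge_def K3_vertices_def by auto
  obtain Q where Q: "prime Q" "\<bar>L 1 - L 2\<bar> = int Q ^ k"
    using E unfolding K3_edge_def K3_vertices_def by auto
  obtain R where R: "prime R" "\<bar>L 0 - L 2\<bar> = int R ^ k"
    using E unfolding K3_edge_def K3_vertices_def by auto
  have "\<bar>L 0 - L 2\<bar> = \<bar>L 0 - L 1\<bar> + \<bar>L 1 - L 2\<bar> \<or>
        \<bar>L 0 - L 1\<bar> = \<bar>L 0 - L 2\<bar> + \<bar>L 1 - L 2\<bar> \<or>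
        \<bar>L 1 - L 2\<bar> = \<bar>L 0 - L 1\<bar> + \<bar>L 0 - L 2\<bar>" by linarith
  moreover have "\<not> \<bar>L 0 - L 2\<bar> = \<bar>L 0 - L 1\<bar> + \<bar>L 1 - L 2\<bar>"
    using int_fermat[OF P(1) Q(1) R(1) assms] P(2) Q(2) R(2) by (metis)
  moreover have "\<not> \<bar>L 0 - L 1\<bar> = \<bar>L 0 - L 2\<bar> + \<bar>L 1 - L 2\<bar>"
    using int_fermat[OF R(1) Q(1) P(1) assms] P(2) Q(2) R(2) by (metis)
  moreover have "\<not> \<bar>L 1 - L 2\<bar> = \<bar>L 0 - L 1\<bar> + \<bar>L 0 - L 2\<bar>"
    using int_fermat[OF P(1) R(1) Q(1) assms] P(2) Q(2) R(2) by (metis)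
  ultimately show False by blast
qed

end
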